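(* Let $n \ge 1$ be an integer and let $s(n,3)$ be the maximum cardinality of a Sidon-type set of strength 3 in $\mathbb{Z}_n$. Then: (i) $s(n,3) \ge \lfloor n/4 \rfloor$ if $n$ is even; (ii) $s(n,3) \ge \lfloor (n+1)/6 \rfloor$ if $n$ is odd and has no divisors congruent to $5 \bmod 6$; (iii) $s(n,3) \ge \frac{(p+1)n}{6p}$ if $n$ is odd and $p$ is its smallest divisor which is congruent to $5 \bmod 6$.
   Context: A subset $S \subseteq \mathbb{Z}_n$ (viewed as a set of integers in $[1,n]$) is a Sidon-type set of strength $t$ if no non-trivial sum $\varepsilon_1 x_1 + \cdots + \varepsilon_t x_t$, with $\varepsilon_i \in \{0,\pm1\}$ and $x_1,\dots,x_t \in S$ not necessarily distinct, is congruent to $0 \bmod n$. Such a sum is called non-trivial if at least one $\varepsilon_i$ is nonzero and no element of $S$ appears in it both with coefficient $+1$ and with coefficient $-1$. $s(n,t)$ denotes the maximum cardinality of a Sidon-type set of strength $t$ in $\mathbb{Z}_n$. *)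

theory Defs
  imports Complex_Main
begin

text \<open>A Sidon-type set of strength t in Z_n, viewed as a set of integers in [1,n].\<close>
definition sidon_type :: "nat \<Rightarrow> nat \<Rightarrow> int set \<Rightarrow> bool" where
  "sidon_type n t S \<longleftrightarrow> S \<subseteq> {1..int n} \<and>
     (\<forall>(e :: nat \<Rightarrow> int) (x :: nat \<Rightarrow> int).
        (\<forall>i<t. e i \<in> {-1, 0, 1}) \<and> (\<forall>i<t. x i \<in> S) \<and> (\<exists>i<t. e i \<noteq> 0) \<and>
        \<not> (\<exists>i<t. \<exists>j<t. x i = x j \<and> e i = 1 \<and> e j = -1)
        \<longrightarrow> \<not> (int n dvd (\<Sum>i<t. e i * x i)))"

definition s :: "nat \<Rightarrow> nat \<Rightarrow> nat" where
  "s n t = Max (card ` {S. sidon_type n t S})"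

end

theory Submission imports Defs begin

lemma sidon3I:
  assumes "S \<subseteq> {1..int n}"
  and "\<And>x0 x1 x2 e0 e1 e2. x0\<in>S \<Longrightarrow> x1\<in>S \<Longrightarrow> x2\<in>S \<Longrightarrow>
     e0 \<in> {-1,0,1} \<Longrightarrow> e1 \<in> {-1,0,1} \<Longrightarrow> e2 \<in> {-1,0,1} \<Longrightarrow>
     e0 \<noteq> 0 \<or> e1 \<noteq> 0 \<or> e2 \<noteq> 0 \<Longrightarrow>
     \<not>(x0 = x1 \<and> e0 = 1 \<and> e1 = -1) \<Longrightarrow> \<not>(x1 = x0 \<and> e1 = 1 \<and> e0 = -1) \<Longrightarrow>
     \<not>(x0 = x2 \<and> e0 = 1 \<and> e2 = -1) \<Longrightarrow> \<not>(x2 = x0 \<and> e2 = 1 \<and> e0 = -1) \<Longrightarrow>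
     \<not>(x1 = x2 \<and> e1 = 1 \<and> e2 = -1) \<Longrightarrow> \<not>(x2 = x1 \<and> e2 = 1 \<and> e1 = -1) \<Longrightarrow>
     int n dvd (e0*x0+e1*x1+e2*x2) \<Longrightarrow> False"
  shows "sidon_type n 3 S"
  unfolding sidon_type_def
proof (intro conjI allI impI notI)
  show "S \<subseteq> {1..int n}" by fact
next
  fix e x :: "nat \<Rightarrow> int"
  assume h: "(\<forall>i<3. e i \<in> {- 1, 0, 1}) \<and> (\<forall>i<3. x i \<in> S) \<and> (\<exists>i<3. e i \<noteq> 0) \<and>
       \<not> (\<exists>i<3. \<exists>j<3. x i = x j \<and> e i = 1 \<and> e j = - 1)"
    and d: "int n dvd (\<Sum>i<3. e i * x i)"
  have l3: "(0::nat) < 3" "(1::nat) < 3" "(2::nat) < 3" by auto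
  have E: "e 0 \<in> {-1,0,1}" "e 1 \<in> {-1,0,1}" "e 2 \<in> {-1,0,1}"
    using h l3 by blast+
  have X: "x 0 \<in> S" "x 1 \<in> S" "x 2 \<in> S"
    using h l3 by blast+
  obtain i where i: "i < 3" "e i \<noteq> 0" using h by blast
  have "i = 0 \<or> i = 1 \<or> i = 2" using i(1) by auto
  hence NZ: "e 0 \<noteq> 0 \<or> e 1 \<noteq> 0 \<or> e 2 \<noteq> 0" using i(2) by auto
  have T: "\<And>i j. i < 3 \<Longrightarrow> j < 3 \<Longrightarrow> \<not> (x i = x j \<and> e i = 1 \<and> e j = -1)"
    using h by blast
  have sm: "(\<Sum>i<3. e i * x i) = e 0 * x 0 + e 1 * x 1 + e 2 * x 2"
    by (simp add: eval_nat_numeral)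
  show False
    apply (rule assms(2)[of "x 0" "x 1" "x 2" "e 0" "e 1" "e 2"])
    using E X NZ T[OF l3(1) l3(2)] T[OF l3(2) l3(1)] T[OF l3(1) l3(3)] T[OF l3(3) l3(1)]
      T[OF l3(2) l3(3)] T[OF l3(3) l3(2)] d unfolding sm by simp_all
qed

lemma dvd_small:
  fixes d v :: int
  assumes "0 < d" "d dvd v" "\<bar>v\<bar> < 2*d"
  shows "v = -d \<or> v = 0 \<or> v = d"
proof -
  obtain k where k: "v = d*k" using assms(2) by auto
  have "\<bar>k\<bar> < 2"
  proof (rule ccontr)
    assume "\<not> \<bar>k\<bar> < 2"
    hence "d*2 \<le> d*\<bar>k\<bar>" using assms(1) by (intro mult_left_mono) auto
    thus False using assms(3) k assms(1) by (simp add: abs_mult)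
  qed
  hence "k = -1 \<or> k = 0 \<or> k = 1" by auto
  thus ?thesis using k by auto
qed

lemma dvd_zero_or_big:
  fixes n v :: int
  assumes "0 < n" "n dvd v"
  shows "v = 0 \<or> n \<le> \<bar>v\<bar>"
proof -
  obtain k where k: "v = n*k" using assms(2) by auto
  show ?thesis
  proof (cases "k = 0")
    case False
    hence "n*1 \<le> n*\<bar>k\<bar>" using assms(1) by (intro mult_left_mono) auto
    thus ?thesis using k assms(1) by (simp add: abs_mult)
  qed (use k in simp)
qed

lemma modlem:
  fixes d e0 e1 e2 x0 x1 x2 :: int
  assumes "d dvd (e0*x0+e1*x1+e2*x2)"
  shows "d dvd (e0*(x0 mod d)+e1*(x1 mod d)+e2*(x2 mod d))"
proof -
  have h: "\<And>x::int. d dvd (x - x mod d)" by (simp add: minus_mod_eq_mult_div)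
  have "e0*x0+e1*x1+e2*x2 - (e0*(x0 mod d)+e1*(x1 mod d)+e2*(x2 mod d))
     = e0*(x0 - x0 mod d) + e1*(x1 - x1 mod d) + e2*(x2 - x2 mod d)"
    by (simp add: algebra_simps)
  moreover have "d dvd e0*(x0 - x0 mod d) + e1*(x1 - x1 mod d) + e2*(x2 - x2 mod d)"
    using h by (intro dvd_add dvd_mult) 
  ultimately have "d dvd (e0*x0+e1*x1+e2*x2 - (e0*(x0 mod d)+e1*(x1 mod d)+e2*(x2 mod d)))"
    by simp
  from dvd_diff[OF assms this] show ?thesis by (simp add: add.assoc)
qed
lemma fin:
  fixes n d x0 x1 x2 e0 e1 e2 a0 a1 a2 :: int
  assumes e: "e0 \<in> {-1,0,1}" "e1 \<in> {-1,0,1}" "e2 \<in> {-1,0,1}"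
  and nz: "e0 \<noteq> 0 \<or> e1 \<noteq> 0 \<or> e2 \<noteq> 0"
  and t: "\<not>(x0 = x1 \<and> e0 = 1 \<and> e1 = -1)" "\<not>(x1 = x0 \<and> e1 = 1 \<and> e0 = -1)"
     "\<not>(x0 = x2 \<and> e0 = 1 \<and> e2 = -1)" "\<not>(x2 = x0 \<and> e2 = 1 \<and> e0 = -1)"
     "\<not>(x1 = x2 \<and> e1 = 1 \<and> e2 = -1)" "\<not>(x2 = x1 \<and> e2 = 1 \<and> e1 = -1)"
  and W3: "e0*a0+e1*a1+e2*a2 = -d \<or> e0*a0+e1*a1+e2*a2 = 0 \<or> e0*a0+e1*a1+e2*a2 = d"
  and V2: "e0*x0+e1*x1+e2*x2 = 0 \<or> n \<le> \<bar>e0*x0+e1*x1+e2*x2\<bar>"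
  and ab: "d < 3*a0" "2*a0 < d" "d < 3*a1" "2*a1 < d" "d < 3*a2" "2*a2 < d"
  and b: "1 \<le> x0" "x0 \<le> n" "1 \<le> x1" "x1 \<le> n" "1 \<le> x2" "x2 \<le> n"
  shows False
  using e nz t W3 V2 ab b by (elim insertE emptyE; simp; arith)
lemma fin2:
  fixes n x0 x1 x2 e0 e1 e2 :: int
  assumes e: "e0 \<in> {-1,0,1}" "e1 \<in> {-1,0,1}" "e2 \<in> {-1,0,1}"
  and nz: "e0 \<noteq> 0 \<or> e1 \<noteq> 0 \<or> e2 \<noteq> 0"
  and t: "\<not>(x0 = x1 \<and> e0 = 1 \<and> e1 = -1)" "\<not>(x1 = x0 \<and> e1 = 1 \<and> e0 = -1)"
     "\<not>(x0 = x2 \<and> e0 = 1 \<and> e2 = -1)" "\<not>(x2 = x0 \<and> e2 = 1 \<and> e0 = -1)"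
     "\<not>(x1 = x2 \<and> e1 = 1 \<and> e2 = -1)" "\<not>(x2 = x1 \<and> e2 = 1 \<and> e1 = -1)"
  and ev: "even (e0*x0+e1*x1+e2*x2)"
  and V2: "e0*x0+e1*x1+e2*x2 = 0 \<or> n \<le> \<bar>e0*x0+e1*x1+e2*x2\<bar>"
  and o: "odd x0" "odd x1" "odd x2"
  and b: "1 \<le> x0" "2*x0 < n" "1 \<le> x1" "2*x1 < n" "1 \<le> x2" "2*x2 < n"
  shows False
  using e nz t ev V2 o b by (elim insertE emptyE; simp; arith)
lemma sidon_d:
  fixes d :: int
  assumes dp: "0 < d" and dn: "d dvd int n" and n1: "1 \<le> n"
  shows "sidon_type n 3 {x::int. 1 \<le> x \<and> x \<le> int n \<and> d < 3*(x mod d) \<and> 2*(x mod d) < d}"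
proof (rule sidon3I)
  show "{x::int. 1 \<le> x \<and> x \<le> int n \<and> d < 3*(x mod d) \<and> 2*(x mod d) < d} \<subseteq> {1..int n}"
    by auto
next
  fix x0 x1 x2 e0 e1 e2 :: int
  assume X: "x0 \<in> {x::int. 1 \<le> x \<and> x \<le> int n \<and> d < 3*(x mod d) \<and> 2*(x mod d) < d}"
    "x1 \<in> {x::int. 1 \<le> x \<and> x \<le> int n \<and> d < 3*(x mod d) \<and> 2*(x mod d) < d}"
    "x2 \<in> {x::int. 1 \<le> x \<and> x \<le> int n \<and> d < 3*(x mod d) \<and> 2*(x mod d) < d}"
  and e: "e0 \<in> {-1,0,1}" "e1 \<in> {-1,0,1}" "e2 \<in> {-1,0,1}"
  and nz: "e0 \<noteq> 0 \<or> e1 \<noteq> 0 \<or> e2 \<noteq> 0"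
  and t: "\<not>(x0 = x1 \<and> e0 = 1 \<and> e1 = -1)" "\<not>(x1 = x0 \<and> e1 = 1 \<and> e0 = -1)"
     "\<not>(x0 = x2 \<and> e0 = 1 \<and> e2 = -1)" "\<not>(x2 = x0 \<and> e2 = 1 \<and> e0 = -1)"
     "\<not>(x1 = x2 \<and> e1 = 1 \<and> e2 = -1)" "\<not>(x2 = x1 \<and> e2 = 1 \<and> e1 = -1)"
  and V: "int n dvd (e0*x0+e1*x1+e2*x2)"
  define a0 where "a0 = x0 mod d"
  define a1 where "a1 = x1 mod d"
  define a2 where "a2 = x2 mod d"
  have ab: "d < 3*a0" "2*a0 < d" "d < 3*a1" "2*a1 < d" "d < 3*a2" "2*a2 < d"
    using X unfolding a0_def a1_def a2_def by auto
  have b: "1 \<le> x0" "x0 \<le> int n" "1 \<le> x1" "x1 \<le> int n" "1 \<le> x2" "x2 \<le> int n"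
    using X by auto
  have W: "d dvd (e0*a0+e1*a1+e2*a2)"
    unfolding a0_def a1_def a2_def
    using modlem[OF dvd_trans[OF dn V]] .
  have "\<bar>e0*a0+e1*a1+e2*a2\<bar> < 2*d"
    using e ab by (elim insertE emptyE; simp; arith)
  hence W3: "e0*a0+e1*a1+e2*a2 = -d \<or> e0*a0+e1*a1+e2*a2 = 0 \<or> e0*a0+e1*a1+e2*a2 = d"
    using dvd_small[OF dp W] by auto
  have V2: "e0*x0+e1*x1+e2*x2 = 0 \<or> int n \<le> \<bar>e0*x0+e1*x1+e2*x2\<bar>"
    using dvd_zero_or_big[OF _ V] n1 by auto
  show False by (rule fin[OF e nz t W3 V2 ab b])
qed

lemma sidon_even:
  assumes ev: "even n" and n1: "1 \<le> n"
  shows "sidon_type n 3 {x::int. 1 \<le> x \<and> 2*x < int n \<and> odd x}"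
proof (rule sidon3I)
  show "{x::int. 1 \<le> x \<and> 2*x < int n \<and> odd x} \<subseteq> {1..int n}"
    by auto
next
  fix x0 x1 x2 e0 e1 e2 :: int
  assume X: "x0 \<in> {x::int. 1 \<le> x \<and> 2*x < int n \<and> odd x}"
    "x1 \<in> {x::int. 1 \<le> x \<and> 2*x < int n \<and> odd x}"
    "x2 \<in> {x::int. 1 \<le> x \<and> 2*x < int n \<and> odd x}"
  and e: "e0 \<in> {-1,0,1}" "e1 \<in> {-1,0,1}" "e2 \<in> {-1,0,1}"
  and nz: "e0 \<noteq> 0 \<or> e1 \<noteq> 0 \<or> e2 \<noteq> 0"
  and t: "\<not>(x0 = x1 \<and> e0 = 1 \<and> e1 = -1)" "\<not>(x1 = x0 \<and> e1 = 1 \<and> e0 = -1)"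
     "\<not>(x0 = x2 \<and> e0 = 1 \<and> e2 = -1)" "\<not>(x2 = x0 \<and> e2 = 1 \<and> e0 = -1)"
     "\<not>(x1 = x2 \<and> e1 = 1 \<and> e2 = -1)" "\<not>(x2 = x1 \<and> e2 = 1 \<and> e1 = -1)"
  and V: "int n dvd (e0*x0+e1*x1+e2*x2)"
  have o: "odd x0" "odd x1" "odd x2" using X by auto
  have b: "1 \<le> x0" "2*x0 < int n" "1 \<le> x1" "2*x1 < int n" "1 \<le> x2" "2*x2 < int n"
    using X by auto
  have "(2::int) dvd int n" using ev by simp
  hence evv: "even (e0*x0+e1*x1+e2*x2)" using V by (rule dvd_trans)
  have V2: "e0*x0+e1*x1+e2*x2 = 0 \<or> int n \<le> \<bar>e0*x0+e1*x1+e2*x2\<bar>"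
    using dvd_zero_or_big[OF _ V] n1 by auto
  show False by (rule fin2[OF e nz t evv V2 o b])
qed

lemma r6: fixes r :: int assumes "0 \<le> r" "r < 6" shows "r = 0 \<or> r = 1 \<or> r = 2 \<or> r = 3 \<or> r = 4 \<or> r = 5"
  using assms by presburger
lemma ar: fixes N :: int assumes "odd N"
  shows "(N - 1) div 2 - (N div 3 + 1) + 1 = (N+1) div 6"
proof -
  define q where "q = N div 6"
  define r where "r = N mod 6"
  have N: "N = 6*q + r" unfolding q_def r_def by simp
  have rb: "0 \<le> r" "r < 6" unfolding r_def by simp_all
  have "odd r" using assms N by auto
  hence "r = 1 \<or> r = 3 \<or> r = 5" using r6[OF rb] by auto
  thus ?thesis
  proof (elim disjE)
    assume r: "r = 1"
    have "(N - 1) div 2 = 3*q" by (rule int_div_pos_eq[of _ _ _ 0]) (use N r in simp_all)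
    moreover have "N div 3 = 2*q" by (rule int_div_pos_eq[of _ _ _ 1]) (use N r in simp_all)
    moreover have "(N+1) div 6 = q" by (rule int_div_pos_eq[of _ _ _ 2]) (use N r in simp_all)
    ultimately show ?thesis by simp
  next
    assume r: "r = 3"
    have "(N - 1) div 2 = 3*q+1" by (rule int_div_pos_eq[of _ _ _ 0]) (use N r in simp_all)
    moreover have "N div 3 = 2*q+1" by (rule int_div_pos_eq[of _ _ _ 0]) (use N r in simp_all)
    moreover have "(N+1) div 6 = q" by (rule int_div_pos_eq[of _ _ _ 4]) (use N r in simp_all)
    ultimately show ?thesis by simp
  next
    assume r: "r = 5"
    have "(N - 1) div 2 = 3*q+2" by (rule int_div_pos_eq[of _ _ _ 0]) (use N r in simp_all)
    moreover have "N div 3 = 2*q+1" by (rule int_div_pos_eq[of _ _ _ 2]) (use N r in simp_all)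
    moreover have "(N+1) div 6 = q+1" by (rule int_div_pos_eq[of _ _ _ 0]) (use N r in simp_all)
    ultimately show ?thesis by simp
  qed
qed

lemma dvb: fixes a b :: int assumes "0 < b" shows "b*(a div b) \<le> a" "a < b*(a div b) + b"
proof -
  have "b*(a div b) + a mod b = a" by simp
  moreover have "0 \<le> a mod b" "a mod b < b" using assms by simp_all
  ultimately show "b*(a div b) \<le> a" "a < b*(a div b) + b" by linarith+
qed

lemma sidon_subset:
  assumes S: "sidon_type n t S" and TS: "T \<subseteq> S"
  shows "sidon_type n t T"
proof -
  have A: "S \<subseteq> {1..int n}" using S unfolding sidon_type_def by (rule conjunct1)
  have B0: "\<forall>(e :: nat \<Rightarrow> int) (x :: nat \<Rightarrow> int).
        (\<forall>i<t. e i \<in> {-1, 0, 1}) \<and> (\<forall>i<t. x i \<in> S) \<and> (\<exists>i<t. e i \<noteq> 0) \<and>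
        \<not> (\<exists>i<t. \<exists>j<t. x i = x j \<and> e i = 1 \<and> e j = -1)
        \<longrightarrow> \<not> (int n dvd (\<Sum>i<t. e i * x i))"
    using S unfolding sidon_type_def by (rule conjunct2)
  show ?thesis unfolding sidon_type_def
  proof (intro conjI allI impI)
    show "T \<subseteq> {1..int n}" using A TS by (rule subset_trans[rotated])
  next
    fix e x :: "nat \<Rightarrow> int"
    assume h: "(\<forall>i<t. e i \<in> {-1, 0, 1}) \<and> (\<forall>i<t. x i \<in> T) \<and> (\<exists>i<t. e i \<noteq> 0) \<and>
        \<not> (\<exists>i<t. \<exists>j<t. x i = x j \<and> e i = 1 \<and> e j = -1)"
    have "(\<forall>i<t. e i \<in> {-1, 0, 1}) \<and> (\<forall>i<t. x i \<in> S) \<and> (\<exists>i<t. e i \<noteq> 0) \<and>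
        \<not> (\<exists>i<t. \<exists>j<t. x i = x j \<and> e i = 1 \<and> e j = -1)" using h TS by blast
    thus "\<not> (int n dvd (\<Sum>i<t. e i * x i))" by (rule mp[OF spec[OF spec[OF B0, of e], of x]])
  qed
qed

lemma card_le_s:
  assumes "sidon_type n 3 S"
  shows "card S \<le> s n 3"
proof -
  have "{S. sidon_type n 3 S} \<subseteq> Pow {1..int n}"
    unfolding sidon_type_def by auto
  hence "finite {S. sidon_type n 3 S}" by (rule finite_subset) simp
  thus ?thesis unfolding s_def using assms by (intro Max_ge) auto
qed

lemma case_even:
  assumes "even n" "1 \<le> n"
  shows "n div 4 \<le> s n 3"
proof -
  have "4 * (n div 4) \<le> n" by simp
  hence f: "4 * int (n div 4) \<le> int n" by linarith
  have sub: "(\<lambda>k. 2*k+1) ` {0..<int (n div 4)} \<subseteq> {x::int. 1 \<le> x \<and> 2*x < int n \<and> odd x}"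
  proof
    fix x assume "x \<in> (\<lambda>k. 2*k+1) ` {0..<int (n div 4)}"
    then obtain k where k: "x = 2*k+1" "0 \<le> k" "k < int (n div 4)" by auto
    have "k + 1 \<le> int (n div 4)" using k by linarith
    thus "x \<in> {x::int. 1 \<le> x \<and> 2*x < int n \<and> odd x}" using k f by auto
  qed
  have "card ((\<lambda>k::int. 2*k+1) ` {0..<int (n div 4)}) = card {0..<int (n div 4)}"
    by (rule card_image) (auto simp: inj_on_def)
  also have "\<dots> = n div 4" by simp
  finally have c: "card ((\<lambda>k::int. 2*k+1) ` {0..<int (n div 4)}) = n div 4" .
  show ?thesis using card_le_s[OF sidon_subset[OF sidon_even[OF assms] sub]] c by simp
qed

lemma card_odd:
  assumes "odd n"
  shows "card {x::int. 1 \<le> x \<and> x \<le> int n \<and> int n < 3*(x mod int n) \<and> 2*(x mod int n) < int n}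
     = (n+1) div 6"
proof -
  have n0: "0 < int n" using assms by (cases n) auto
  note d3 = dvb[of 3 "int n"] and d2 = dvb[of 2 "int n - 1"]
  have B0: "0 \<le> int n div 3" by simp
  have eq: "{x::int. 1 \<le> x \<and> x \<le> int n \<and> int n < 3*(x mod int n) \<and> 2*(x mod int n) < int n}
     = {int n div 3 + 1 .. (int n - 1) div 2}"
  proof (rule set_eqI, rule iffI)
    fix x assume a: "x \<in> {x::int. 1 \<le> x \<and> x \<le> int n \<and> int n < 3*(x mod int n) \<and> 2*(x mod int n) < int n}"
    hence "x \<noteq> int n" by auto
    hence "x mod int n = x" using a by (intro mod_pos_pos_trivial) auto
    hence "int n < 3*x" "2*x < int n" using a by auto
    thus "x \<in> {int n div 3 + 1 .. (int n - 1) div 2}" using d3 d2 by auto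
  next
    fix x assume a: "x \<in> {int n div 3 + 1 .. (int n - 1) div 2}"
    hence xa: "int n div 3 + 1 \<le> x" "x \<le> (int n - 1) div 2" by auto
    have "0 \<le> x" "x < int n" using xa B0 d2 by linarith+
    hence "x mod int n = x" by (intro mod_pos_pos_trivial) auto
    thus "x \<in> {x::int. 1 \<le> x \<and> x \<le> int n \<and> int n < 3*(x mod int n) \<and> 2*(x mod int n) < int n}"
      using xa B0 d2 d3 by auto
  qed
  have "(int n - 1) div 2 - (int n div 3 + 1) + 1 = (int n + 1) div 6"
    by (rule ar) (use assms in simp)
  also have "\<dots> = int ((n+1) div 6)" by (simp add: zdiv_int)
  finally show ?thesis unfolding eq card_atLeastAtMost_int by simp
qed

lemma card_p:
  fixes p m :: nat
  assumes p5: "p mod 6 = 5"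
  shows "card {x::int. 1 \<le> x \<and> x \<le> int (p*m) \<and> int p < 3*(x mod int p) \<and> 2*(x mod int p) < int p}
     = m * ((p+1) div 6)"
proof -
  define P where "P = int p"
  have P0: "0 < P" using p5 unfolding P_def by (cases p) auto
  have pk: "p = 6*(p div 6) + 5" using div_mult_mod_eq[of p 6] p5 by simp
  have op: "odd p" by (subst pk) simp
  define R where "R = {P div 3 + 1 .. (P - 1) div 2}"
  note d3 = dvb[of 3 P] and d2 = dvb[of 2 "P - 1"]
  have B0: "0 \<le> P div 3" using P0 by simp
  have R: "\<And>r. r \<in> R \<longleftrightarrow> 0 \<le> r \<and> r < P \<and> P < 3*r \<and> 2*r < P"
  proof
    fix r assume "r \<in> R"
    hence xa: "P div 3 + 1 \<le> r" "r \<le> (P - 1) div 2" unfolding R_def by auto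
    show "0 \<le> r \<and> r < P \<and> P < 3*r \<and> 2*r < P" using xa B0 d2 d3 by auto
  next
    fix r assume "0 \<le> r \<and> r < P \<and> P < 3*r \<and> 2*r < P"
    thus "r \<in> R" unfolding R_def using d2 d3 by auto
  qed
  have "(P - 1) div 2 - (P div 3 + 1) + 1 = (P + 1) div 6"
    by (rule ar) (use op in \<open>simp add: P_def\<close>)
  also have "\<dots> = int ((p+1) div 6)" unfolding P_def by (simp add: zdiv_int)
  finally have cR: "card R = (p+1) div 6"
    unfolding R_def card_atLeastAtMost_int by simp
  define f where "f = (\<lambda>(q::int, r::int). q*P + r)"
  have eq: "{x::int. 1 \<le> x \<and> x \<le> int (p*m) \<and> int p < 3*(x mod int p) \<and> 2*(x mod int p) < int p}
     = f ` ({0..<int m} \<times> R)"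
  proof (rule set_eqI, rule iffI)
    fix x assume a: "x \<in> {x::int. 1 \<le> x \<and> x \<le> int (p*m) \<and> int p < 3*(x mod int p) \<and> 2*(x mod int p) < int p}"
    hence a': "1 \<le> x" "x \<le> P * int m" "P < 3*(x mod P)" "2*(x mod P) < P"
      unfolding P_def by auto
    have xr: "x = (x div P)*P + x mod P" by simp
    have rr: "x mod P \<in> R" using a' P0 R by auto
    have q0: "0 \<le> x div P" using a' P0 by (simp add: pos_imp_zdiv_nonneg_iff)
    have qm: "x div P < int m"
    proof (rule ccontr)
      assume "\<not> x div P < int m"
      hence "int m * P \<le> (x div P) * P" using P0 by (intro mult_right_mono) auto
      moreover have "P * int m = int m * P" by simp
      ultimately show False using a' xr P0 by linarith
    qed
    show "x \<in> f ` ({0..<int m} \<times> R)"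
      using q0 qm rr xr unfolding f_def by (intro image_eqI[of _ _ "(x div P, x mod P)"]) auto
  next
    fix x assume "x \<in> f ` ({0..<int m} \<times> R)"
    then obtain q r where qr: "x = q*P + r" "0 \<le> q" "q < int m" "r \<in> R" unfolding f_def by auto
    have r: "0 \<le> r" "r < P" "P < 3*r" "2*r < P" using qr(4) R by auto
    have xm: "x mod P = r" using qr(1) r by simp
    have "q*P \<le> (int m - 1)*P" using qr P0 by (intro mult_right_mono) auto
    hence "x \<le> P * int m" using qr(1) r by (simp add: algebra_simps)
    moreover have "0 \<le> q*P" using qr P0 by simp
    ultimately show "x \<in> {x::int. 1 \<le> x \<and> x \<le> int (p*m) \<and> int p < 3*(x mod int p) \<and> 2*(x mod int p) < int p}"
      using xm r qr(1) unfolding P_def by (auto simp: mult.commute)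
  qed
  have inj: "inj_on f ({0..<int m} \<times> R)"
  proof (rule inj_onI)
    fix u v assume u: "u \<in> {0..<int m} \<times> R" and v: "v \<in> {0..<int m} \<times> R" and fe: "f u = f v"
    obtain q r where u': "u = (q, r)" by (cases u)
    obtain q' r' where v': "v = (q', r')" by (cases v)
    have r: "0 \<le> r" "r < P" "0 \<le> r'" "r' < P" using u v u' v' R by auto
    have e1: "q*P + r = q'*P + r'" using fe u' v' unfolding f_def by simp
    have "(q*P + r) mod P = r" "(q'*P + r') mod P = r'" using r by simp_all
    hence "r = r'" using e1 by simp
    hence "q*P = q'*P" using e1 by simp
    hence "q = q'" using P0 by simp
    thus "u = v" using u' v' \<open>r = r'\<close> by simp
  qed
  have "card (f ` ({0..<int m} \<times> R)) = card ({0..<int m} \<times> R)" by (rule card_image[OF inj])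
  also have "\<dots> = m * ((p+1) div 6)" by (simp add: card_cartesian_product cR)
  finally show ?thesis using eq by simp
qed

theorem theorem4p1:
  fixes n :: nat
  assumes "n \<ge> 1"
  shows "(even n \<longrightarrow> n div 4 \<le> s n 3)
       \<and> (odd n \<and> \<not> (\<exists>d. d dvd n \<and> d mod 6 = 5) \<longrightarrow> (n + 1) div 6 \<le> s n 3)
       \<and> (\<forall>p :: nat. odd n \<and> p dvd n \<and> p mod 6 = 5 \<and> (\<forall>d. d dvd n \<and> d mod 6 = 5 \<longrightarrow> p \<le> d)
            \<longrightarrow> real ((p + 1) * n) / real (6 * p) \<le> real (s n 3))"
proof (intro conjI impI allI)
  assume "even n"
  thus "n div 4 \<le> s n 3"
    by (rule case_even[OF _ assms])
next
  assume a: "odd n \<and> \<not> (\<exists>d. d dvd n \<and> d mod 6 = 5)"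
  have n0: "0 < int n" using assms by simp
  have "sidon_type n 3 {x::int. 1 \<le> x \<and> x \<le> int n \<and> int n < 3*(x mod int n) \<and> 2*(x mod int n) < int n}"
    by (rule sidon_d[OF n0 dvd_refl assms])
  from card_le_s[OF this] show "(n + 1) div 6 \<le> s n 3"
    unfolding card_odd[OF conjunct1[OF a]] .
next
  fix p :: nat
  assume a: "odd n \<and> p dvd n \<and> p mod 6 = 5 \<and> (\<forall>d. d dvd n \<and> d mod 6 = 5 \<longrightarrow> p \<le> d)"
  have pd: "p dvd n" using a by (elim conjE)
  then obtain m where nm: "n = p*m" by (elim dvdE)
  have p5: "p mod 6 = 5" using a by (elim conjE)
  have p0: "0 < int p" using p5 by (cases p) auto
  have pdi: "int p dvd int n" using pd by simp
  have "sidon_type n 3 {x::int. 1 \<le> x \<and> x \<le> int n \<and> int p < 3*(x mod int p) \<and> 2*(x mod int p) < int p}"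
    by (rule sidon_d[OF p0 pdi assms])
  from card_le_s[OF this] have le: "m * ((p+1) div 6) \<le> s n 3"
    unfolding nm card_p[OF p5] .
  have pk: "p = 6*(p div 6) + 5" using div_mult_mod_eq[of p 6] p5 by simp
  have s1: "p + 1 = 6*(p div 6 + 1)" using pk by simp
  hence "(p+1) div 6 = p div 6 + 1" by simp
  hence six: "p + 1 = 6 * ((p+1) div 6)" using s1 by simp
  have pr: "real p > 0" using p0 by simp
  have "real ((p + 1) * n) = real (6 * ((p+1) div 6)) * real (p*m)"
    using six nm by (metis of_nat_mult)
  hence "real ((p + 1) * n) / real (6 * p) = real (m * ((p+1) div 6))"
    using pr by (simp add: field_simps)
  also have "\<dots> \<le> real (s n 3)" using le by (simp only: of_nat_le_iff)
  finally show "real ((p + 1) * n) / real (6 * p) \<le> real (s n 3)" .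
qed

end
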